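(* Let $\mathfrak{A}$ be a finite-dimensional $C^*$-algebra with canonical normalized trace $\tau$ and $\|X\|_2=\sqrt{\tau(X^*X)}$. Let $\mathcal{N}$ be a $k$-net of order $d$ over $\mathfrak{A}$ with $2\le k\le\sqrt d$, and let $\mathcal{A}_1,\dots,\mathcal{A}_k$ be the linear spans of its parallel classes. Let $P=P^2=P^*\in\mathrm{Span}(\mathcal{N})$ with $\tau(P)=1/d$, and write $P-\frac1d I=\sum_{j=1}^k A_j$ with $A_j\in\mathcal{A}_j$, $\tau(A_j)=0$ (this decomposition is unique and each $A_j$ is self-adjoint). Put $t_j=\frac{d}{\sqrt{d-1}}\|A_j\|_2$ and let $r$ be an index with $t_r^2\ge 1/k$. Write $A_r=\sum_{s=1}^d\lambda_sQ_s$ where $Q_1,\dots,Q_d$ are the elements of the $r$-th parallel class. Then every $\lambda\in\{\lambda_1,\dots,\lambda_d\}$ (the spectrum of $A_r$) satisfies $$\lambda^2-\frac{d-2}{d}\lambda+\frac{d-1}{d^2}\Big(k-3+\frac1k\Big)\ge 0;$$ in particular $\lambda\le\lambda_-$ or $\lambda\ge\lambda_+$, where $$\lambda_\pm=\frac{1}{2d}\Big(d-2\pm\sqrt{(d-2)^2-4(d-1)\big(k-3+\tfrac1k\big)}\Big)$$ (the discriminant being nonnegative for $k\le\sqrt d$).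
   Context: $\tau=\mathrm{Tr}/\mathrm{Tr}(I)$, where $\mathrm{Tr}$ is the canonical trace of $\mathfrak{A}$ (assigning $1$ to each minimal projection). A $k$-net over $\mathfrak{A}$ is a set $\mathcal{N}$ of orthogonal projections in $\mathfrak{A}$ such that: (i) the relation "$P=Q$ or $PQ=0$" is an equivalence relation on $\mathcal{N}$ with exactly $k$ classes (parallel classes); (ii) if $P,Q\in\mathcal{N}$ lie in different classes then $\tau(PQ)=1/\dim(\mathfrak{A})$; (iii) the elements of each class sum to $I$. Order $d$ means every class has exactly $d$ elements. The spans $\mathcal{A}_j$ are commutative unital $*$-subalgebras that are pairwise quasi-orthogonal: $\tau(AB)=\tau(A)\tau(B)$ for $A\in\mathcal{A}_j,B\in\mathcal{A}_\ell$, $j\ne\ell$. *)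

theory Defs
  imports Complex_Main
begin

text \<open>A finite-dimensional C*-algebra is (up to *-isomorphism) a direct sum
  of full matrix algebras M_{n_1} + ... + M_{n_m}.  We model it concretely by the
  list ns = [n_1,...,n_m] of block sizes (all positive, m >= 1).  An element is a
  function X i a b (block i, row a, column b), vanishing outside the blocks.\<close>

type_synonym cel = "nat \<Rightarrow> nat \<Rightarrow> nat \<Rightarrow> complex"

definition valid_blocks :: "nat list \<Rightarrow> bool" where
  "valid_blocks ns \<longleftrightarrow> ns \<noteq> [] \<and> (\<forall>n\<in>set ns. 0 < n)"

definition inBlk :: "nat list \<Rightarrow> nat \<Rightarrow> nat \<Rightarrow> nat \<Rightarrow> bool" where
  "inBlk ns i a b \<longleftrightarrow> i < length ns \<and> a < ns ! i \<and> b < ns ! i"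

definition inA :: "nat list \<Rightarrow> cel \<Rightarrow> bool" where
  "inA ns X \<longleftrightarrow> (\<forall>i a b. \<not> inBlk ns i a b \<longrightarrow> X i a b = 0)"

definition czero :: cel where
  "czero = (\<lambda>i a b. 0)"

definition cone :: "nat list \<Rightarrow> cel" where
  "cone ns = (\<lambda>i a b. if inBlk ns i a b \<and> a = b then 1 else 0)"

definition cadd :: "cel \<Rightarrow> cel \<Rightarrow> cel" where
  "cadd X Y = (\<lambda>i a b. X i a b + Y i a b)"

definition csub :: "cel \<Rightarrow> cel \<Rightarrow> cel" where
  "csub X Y = (\<lambda>i a b. X i a b - Y i a b)"

definition csc :: "complex \<Rightarrow> cel \<Rightarrow> cel" where
  "csc c X = (\<lambda>i a b. c * X i a b)"

definition csum :: "'x set \<Rightarrow> ('x \<Rightarrow> cel) \<Rightarrow> cel" where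
  "csum F f = (\<lambda>i a b. \<Sum>x\<in>F. f x i a b)"

definition cmul :: "nat list \<Rightarrow> cel \<Rightarrow> cel \<Rightarrow> cel" where
  "cmul ns X Y = (\<lambda>i a b. if inBlk ns i a b then (\<Sum>c<ns ! i. X i a c * Y i c b) else 0)"

definition cadj :: "cel \<Rightarrow> cel" where
  "cadj X = (\<lambda>i a b. cnj (X i b a))"

text \<open>Canonical trace: value 1 on each minimal projection, i.e. sum of the
  ordinary matrix traces of the blocks.\<close>
definition cTr :: "nat list \<Rightarrow> cel \<Rightarrow> complex" where
  "cTr ns X = (\<Sum>i<length ns. \<Sum>a<ns ! i. X i a a)"

definition ctau :: "nat list \<Rightarrow> cel \<Rightarrow> complex" where
  "ctau ns X = cTr ns X / cTr ns (cone ns)"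

definition cdim :: "nat list \<Rightarrow> nat" where
  "cdim ns = (\<Sum>i<length ns. (ns ! i)^2)"

definition cnorm2 :: "nat list \<Rightarrow> cel \<Rightarrow> real" where
  "cnorm2 ns X = sqrt (Re (ctau ns (cmul ns (cadj X) X)))"

definition is_proj :: "nat list \<Rightarrow> cel \<Rightarrow> bool" where
  "is_proj ns X \<longleftrightarrow> inA ns X \<and> cmul ns X X = X \<and> cadj X = X"

definition cspan :: "cel set \<Rightarrow> cel set" where
  "cspan S = {X. \<exists>F c. finite F \<and> F \<subseteq> S \<and> X = csum F (\<lambda>Q. csc (c Q) Q)}"

definition par_rel :: "nat list \<Rightarrow> cel set \<Rightarrow> (cel \<times> cel) set" where
  "par_rel ns N = {(P, Q). P \<in> N \<and> Q \<in> N \<and> (P = Q \<or> cmul ns P Q = czero)}"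

definition is_net :: "nat list \<Rightarrow> nat \<Rightarrow> cel set \<Rightarrow> bool" where
  "is_net ns k N \<longleftrightarrow>
     (\<forall>P\<in>N. is_proj ns P) \<and>
     equiv N (par_rel ns N) \<and>
     finite (N // par_rel ns N) \<and> card (N // par_rel ns N) = k \<and>
     (\<forall>P\<in>N. \<forall>Q\<in>N. (P, Q) \<notin> par_rel ns N \<longrightarrow>
        ctau ns (cmul ns P Q) = 1 / of_nat (cdim ns)) \<and>
     (\<forall>C\<in>N // par_rel ns N. finite C \<and> csum C (\<lambda>Q. Q) = cone ns)"

definition net_order :: "nat list \<Rightarrow> cel set \<Rightarrow> nat \<Rightarrow> bool" where
  "net_order ns N d \<longleftrightarrow> (\<forall>C\<in>N // par_rel ns N. card C = d)"

end

theory Submission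
  imports Defs
begin


lemma cmul_assoc: "cmul ns (cmul ns X Y) Z = cmul ns X (cmul ns Y Z)"
  unfolding cmul_def
  by (rule ext)+ (auto simp: inBlk_def sum_distrib_left sum_distrib_right mult.assoc intro: sum.swap)

lemma cTr_comm: "cTr ns (cmul ns X Y) = cTr ns (cmul ns Y X)"
  unfolding cTr_def cmul_def
  apply (rule sum.cong[OF refl])
  apply (simp add: inBlk_def)
  apply (subst sum.swap)
  apply (simp add: mult.commute)
  done

lemma cadj_mul: "cadj (cmul ns X Y) = cmul ns (cadj Y) (cadj X)"
  unfolding cmul_def cadj_def
  by (rule ext)+ (auto simp: inBlk_def mult.commute)

lemma cmul_csum_left: "cmul ns (csum F f) Y = csum F (\<lambda>x. cmul ns (f x) Y)"
  unfolding cmul_def csum_def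
  by (rule ext)+ (auto simp: sum_distrib_right intro: sum.swap)

lemma cmul_csum_right: "cmul ns Y (csum F f) = csum F (\<lambda>x. cmul ns Y (f x))"
  unfolding cmul_def csum_def
  by (rule ext)+ (auto simp: sum_distrib_left intro: sum.swap)

lemma cmul_csc_left: "cmul ns (csc c X) Y = csc c (cmul ns X Y)"
  unfolding cmul_def csc_def
  by (rule ext)+ (auto simp: sum_distrib_left mult.assoc)

lemma cmul_csc_right: "cmul ns Y (csc c X) = csc c (cmul ns Y X)"
  unfolding cmul_def csc_def
  by (rule ext)+ (auto simp: sum_distrib_left mult.assoc mult.left_commute)

lemma cmul_sub_left: "cmul ns (csub X Z) Y = csub (cmul ns X Y) (cmul ns Z Y)"
  unfolding cmul_def csub_def
  by (rule ext)+ (auto simp: algebra_simps sum_subtractf)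

lemma cmul_sub_right: "cmul ns Y (csub X Z) = csub (cmul ns Y X) (cmul ns Y Z)"
  unfolding cmul_def csub_def
  by (rule ext)+ (auto simp: algebra_simps sum_subtractf)

lemma cmul_add_left: "cmul ns (cadd X Z) Y = cadd (cmul ns X Y) (cmul ns Z Y)"
  unfolding cmul_def cadd_def
  by (rule ext)+ (auto simp: algebra_simps sum.distrib)

lemma cTr_csum: "cTr ns (csum F f) = (\<Sum>x\<in>F. cTr ns (f x))"
  unfolding cTr_def csum_def
  by (subst sum.swap) (simp add: sum.swap[of _ F])

lemma cTr_csc: "cTr ns (csc c X) = c * cTr ns X"
  unfolding cTr_def csc_def by (simp add: sum_distrib_left)

lemma cTr_sub: "cTr ns (csub X Y) = cTr ns X - cTr ns Y"
  unfolding cTr_def csub_def by (simp add: sum_subtractf)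

lemma cTr_add: "cTr ns (cadd X Y) = cTr ns X + cTr ns Y"
  unfolding cTr_def cadd_def by (simp add: sum.distrib)

lemma ctau_csum: "ctau ns (csum F f) = (\<Sum>x\<in>F. ctau ns (f x))"
  unfolding ctau_def cTr_csum by (simp add: sum_divide_distrib)

lemma ctau_csc: "ctau ns (csc c X) = c * ctau ns X"
  unfolding ctau_def cTr_csc by simp

lemma ctau_sub: "ctau ns (csub X Y) = ctau ns X - ctau ns Y"
  unfolding ctau_def cTr_sub by (simp add: diff_divide_distrib)

lemma ctau_add: "ctau ns (cadd X Y) = ctau ns X + ctau ns Y"
  unfolding ctau_def cTr_add by (simp add: add_divide_distrib)

lemma ctau_comm: "ctau ns (cmul ns X Y) = ctau ns (cmul ns Y X)"
  unfolding ctau_def by (simp add: cTr_comm)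

lemma cadj_csum: "cadj (csum F f) = csum F (\<lambda>x. cadj (f x))"
  unfolding cadj_def csum_def by auto

lemma cadj_csc: "cadj (csc c X) = csc (cnj c) (cadj X)"
  unfolding cadj_def csc_def by auto

lemma cadj_sub: "cadj (csub X Y) = csub (cadj X) (cadj Y)"
  unfolding cadj_def csub_def by auto

lemma cadj_cone: "cadj (cone ns) = cone ns"
  unfolding cadj_def cone_def by (rule ext)+ (auto simp: inBlk_def)

lemma ifmul1: "(if P then 1 else 0) * (x::complex) = (if P then x else 0)" by simp
lemma ifmul2: "(x::complex) * (if P then 1 else 0) = (if P then x else 0)" by simp

lemma cmul_cone_right: "inA ns X \<Longrightarrow> cmul ns X (cone ns) = X"
  unfolding cmul_def cone_def inA_def
  apply (rule ext)+
  apply (auto simp: inBlk_def ifmul1 ifmul2)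
  done

lemma cmul_cone_left: "inA ns X \<Longrightarrow> cmul ns (cone ns) X = X"
  unfolding cmul_def cone_def inA_def
  apply (rule ext)+
  apply (auto simp: inBlk_def ifmul1 ifmul2)
  done

lemma cmul_czero_left: "cmul ns czero X = czero" 
  unfolding cmul_def czero_def by (rule ext)+ auto

lemma cTr_cone: "cTr ns (cone ns) = of_nat (\<Sum>i<length ns. ns ! i)"
  unfolding cTr_def cone_def by (simp add: inBlk_def)

lemma cTr_cone_pos: "valid_blocks ns \<Longrightarrow> (\<Sum>i<length ns. ns ! i) > 0"
  unfolding valid_blocks_def
  by (metis gr0I length_greater_0_conv lessThan_iff nth_mem sum_eq_0_iff finite_lessThan)

lemma ctau_cone: "valid_blocks ns \<Longrightarrow> ctau ns (cone ns) = 1"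
proof -
  assume "valid_blocks ns"
  hence "(\<Sum>i<length ns. ns ! i) \<noteq> 0" using cTr_cone_pos[of ns] by linarith
  hence "cTr ns (cone ns) \<noteq> 0" unfolding cTr_cone of_nat_eq_0_iff .
  thus ?thesis unfolding ctau_def by simp
qed

lemma cnj_mult_self: "cnj z * z = complex_of_real ((cmod z)^2)"
  by (metis complex_norm_square mult.commute of_real_power)

definition hsum :: "nat list \<Rightarrow> cel \<Rightarrow> real" where
  "hsum ns X = (\<Sum>i<length ns. \<Sum>a<ns ! i. \<Sum>c<ns ! i. (cmod (X i c a))^2)"

lemma cTr_hs: "cTr ns (cmul ns (cadj X) X) = of_real (hsum ns X)"
  unfolding cTr_def cmul_def cadj_def hsum_def
  by (simp add: inBlk_def cnj_mult_self)

lemma sq_sum_le: "(\<Sum>j\<in>J. (x j::real))^2 \<le> real (card J) * (\<Sum>j\<in>J. (x j)^2)"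
proof -
  have "0 \<le> (\<Sum>i\<in>J. \<Sum>j\<in>J. (x i - x j)^2)" by (intro sum_nonneg) simp
  also have "\<dots> = 2 * real (card J) * (\<Sum>j\<in>J. (x j)^2) - 2 * (\<Sum>j\<in>J. x j)^2"
    by (simp add: power2_diff sum.distrib sum_subtractf sum_distrib_left sum_distrib_right power2_eq_square algebra_simps)
  finally show ?thesis by simp
qed

lemma cmod_sum_sq: "finite J \<Longrightarrow> (cmod (\<Sum>j\<in>J. z j))^2 \<le> real (card J) * (\<Sum>j\<in>J. (cmod (z j))^2)"
proof -
  assume "finite J"
  have "cmod (\<Sum>j\<in>J. z j) \<le> (\<Sum>j\<in>J. cmod (z j))" by (rule norm_sum)
  hence "(cmod (\<Sum>j\<in>J. z j))^2 \<le> (\<Sum>j\<in>J. cmod (z j))^2"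
    by (simp add: power_mono)
  also have "\<dots> \<le> real (card J) * (\<Sum>j\<in>J. (cmod (z j))^2)" by (rule sq_sum_le)
  finally show ?thesis .
qed

lemma hsum_csum: "finite J \<Longrightarrow> hsum ns (csum J f) \<le> real (card J) * (\<Sum>j\<in>J. hsum ns (f j))"
proof -
  assume J: "finite J"
  have "hsum ns (csum J f) \<le> (\<Sum>i<length ns. \<Sum>a<ns ! i. \<Sum>c<ns ! i. real (card J) * (\<Sum>j\<in>J. (cmod (f j i c a))^2))"
    unfolding hsum_def csum_def
    by (intro sum_mono cmod_sum_sq J)
  also have "\<dots> = real (card J) * (\<Sum>j\<in>J. hsum ns (f j))"
    unfolding hsum_def
    by (simp add: sum_distrib_left sum.swap[of _ J])
  finally show ?thesis .
qed



definition lc :: "cel set \<Rightarrow> (cel \<Rightarrow> complex) \<Rightarrow> cel" where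
  "lc C a = csum C (\<lambda>R. csc (a R) R)"

locale netctx =
  fixes ns :: "nat list" and k d :: nat and N :: "cel set"
  assumes blocks: "valid_blocks ns"
    and net: "is_net ns k N" and ord: "net_order ns N d"
    and k2: "2 \<le> k"
begin

abbreviation "CL \<equiv> N // par_rel ns N"

lemma eqv: "equiv N (par_rel ns N)" using net unfolding is_net_def by blast
lemma CL_fin: "finite CL" using net unfolding is_net_def by blast
lemma CL_card: "card CL = k" using net unfolding is_net_def by blast
lemma cls_fin: "C \<in> CL \<Longrightarrow> finite C" using net unfolding is_net_def by blast
lemma cls_sum: "C \<in> CL \<Longrightarrow> csum C (\<lambda>Q. Q) = cone ns" using net unfolding is_net_def by blast
lemma cls_card: "C \<in> CL \<Longrightarrow> card C = d" using ord unfolding net_order_def by blast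
lemma cls_sub: "C \<in> CL \<Longrightarrow> C \<subseteq> N" using eqv by (meson in_quotient_imp_subset equiv_type)
lemma projN: "R \<in> N \<Longrightarrow> is_proj ns R" using net unfolding is_net_def by blast
lemma proj: "C \<in> CL \<Longrightarrow> R \<in> C \<Longrightarrow> is_proj ns R" using cls_sub projN by blast
lemma projI: "C \<in> CL \<Longrightarrow> R \<in> C \<Longrightarrow> cmul ns R R = R"
  using proj unfolding is_proj_def by blast
lemma projA: "C \<in> CL \<Longrightarrow> R \<in> C \<Longrightarrow> cadj R = R"
  using proj unfolding is_proj_def by blast
lemma projinA: "C \<in> CL \<Longrightarrow> R \<in> C \<Longrightarrow> inA ns R"
  using proj unfolding is_proj_def by blast

lemma same: "C \<in> CL \<Longrightarrow> R \<in> C \<Longrightarrow> R' \<in> C \<Longrightarrow> R \<noteq> R' \<Longrightarrow> cmul ns R R' = czero"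
proof -
  assume a: "C \<in> CL" "R \<in> C" "R' \<in> C" "R \<noteq> R'"
  hence "(R, R') \<in> par_rel ns N" using quotient_eq_iff[OF eqv a(1) a(1) a(2) a(3)] by simp
  thus ?thesis using a(4) unfolding par_rel_def by simp
qed

lemma diff: "C \<in> CL \<Longrightarrow> C' \<in> CL \<Longrightarrow> C \<noteq> C' \<Longrightarrow> R \<in> C \<Longrightarrow> R' \<in> C' \<Longrightarrow>
   ctau ns (cmul ns R R') = 1 / of_nat (cdim ns)"
proof -
  assume a: "C \<in> CL" "C' \<in> CL" "C \<noteq> C'" "R \<in> C" "R' \<in> C'"
  hence "(R, R') \<notin> par_rel ns N" using quotient_eq_iff[OF eqv a(1) a(2) a(4) a(5)] by simp
  moreover have "R \<in> N" "R' \<in> N" using a cls_sub by auto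
  moreover have "\<forall>P\<in>N. \<forall>Q\<in>N. (P, Q) \<notin> par_rel ns N \<longrightarrow>
        ctau ns (cmul ns P Q) = 1 / of_nat (cdim ns)" using net unfolding is_net_def by (elim conjE)
  ultimately show ?thesis by blast
qed

lemma other: "C \<in> CL \<Longrightarrow> \<exists>C'\<in>CL. C' \<noteq> C"
proof (rule ccontr)
  assume a: "C \<in> CL" "\<not> (\<exists>C'\<in>CL. C' \<noteq> C)"
  hence "CL \<subseteq> {C}" by blast
  hence "card CL \<le> card {C}" by (intro card_mono) auto
  hence "card CL \<le> 1" by simp
  thus False using CL_card k2 by simp
qed

lemma classof: "R \<in> N \<Longrightarrow> \<exists>C\<in>CL. R \<in> C"
  using eqv by (metis equiv_class_self quotientI)

lemma cls_ne: "C \<in> CL \<Longrightarrow> C \<noteq> {}"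
  using eqv in_quotient_imp_non_empty by blast

lemma exC: "\<exists>C. C \<in> CL"
proof (rule ccontr)
  assume "\<not> (\<exists>C. C \<in> CL)"
  hence "CL = {}" by auto
  thus False using CL_card k2 by simp
qed

lemma exCR: "\<exists>C R. C \<in> CL \<and> R \<in> C"
  using exC cls_ne by blast

lemma d_pos: "d > 0"
proof -
  obtain C R where "C \<in> CL" "R \<in> C" using exCR by blast
  thus ?thesis using cls_card cls_fin card_gt_0_iff by blast
qed

lemma tauR0: "R \<in> N \<Longrightarrow> ctau ns R = of_nat d / of_nat (cdim ns)"
proof -
  assume "R \<in> N"
  then obtain C where C: "C \<in> CL" "R \<in> C" using classof by blast
  then obtain C' where C': "C' \<in> CL" "C' \<noteq> C" using other by blast
  have "ctau ns R = ctau ns (cmul ns R (cone ns))" using projinA[OF C] cmul_cone_right by simp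
  also have "\<dots> = ctau ns (cmul ns R (csum C' (\<lambda>Q. Q)))"
    using cls_sum[OF C'(1)] by simp
  also have "\<dots> = (\<Sum>Q\<in>C'. ctau ns (cmul ns R Q))"
    unfolding cmul_csum_right ctau_csum ..
  also have "\<dots> = (\<Sum>Q\<in>C'. 1 / of_nat (cdim ns))"
  proof (rule sum.cong[OF refl])
    fix Q assume "Q \<in> C'"
    thus "ctau ns (cmul ns R Q) = 1 / of_nat (cdim ns)"
      using diff[OF C(1) C'(1) C'(2)[symmetric] C(2)] by simp
  qed
  also have "\<dots> = of_nat d / of_nat (cdim ns)" using cls_card[OF C'(1)] by simp
  finally show ?thesis .
qed

lemma cdim_eq: "(of_nat (cdim ns) :: complex) = of_nat d * of_nat d"
proof -
  obtain C R where C: "C \<in> CL" "R \<in> C" using exCR by blast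
  have "1 = ctau ns (cone ns)" using ctau_cone blocks by simp
  also have "\<dots> = ctau ns (csum C (\<lambda>Q. Q))" using cls_sum[OF C(1)] by simp
  also have "\<dots> = (\<Sum>Q\<in>C. ctau ns Q)" unfolding ctau_csum ..
  also have "\<dots> = (\<Sum>Q\<in>C. of_nat d / of_nat (cdim ns))"
  proof (rule sum.cong[OF refl])
    fix Q assume "Q \<in> C"
    thus "ctau ns Q = of_nat d / of_nat (cdim ns)" using tauR0 cls_sub[OF C(1)] by blast
  qed
  also have "\<dots> = of_nat d * of_nat d / of_nat (cdim ns)" using cls_card[OF C(1)] by simp
  finally have e: "1 = (of_nat d * of_nat d / of_nat (cdim ns) :: complex)" .
  hence "(of_nat (cdim ns) :: complex) \<noteq> 0" by auto
  with e show ?thesis by (simp add: field_simps)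
qed

lemma tauR: "R \<in> N \<Longrightarrow> ctau ns R = 1 / of_nat d"
  using tauR0 cdim_eq d_pos by simp

lemma diff2: "C \<in> CL \<Longrightarrow> C' \<in> CL \<Longrightarrow> C \<noteq> C' \<Longrightarrow> R \<in> C \<Longrightarrow> R' \<in> C' \<Longrightarrow>
   ctau ns (cmul ns R R') = 1 / (of_nat d)^2"
  using diff cdim_eq by (simp add: power2_eq_square)


lemma ifapp: "(if c then (f::cel) else g) i x y = (if c then f i x y else g i x y)" by simp

lemma czero_app: "czero i x y = 0" by (simp add: czero_def)

lemma mulQ_cases: "C \<in> CL \<Longrightarrow> Q \<in> C \<Longrightarrow> R \<in> C \<Longrightarrow>
   cmul ns R Q = (if R = Q then Q else czero)"
  using same projI by auto

lemma lc_mulQ: assumes C: "C \<in> CL" and Q: "Q \<in> C"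
  shows "cmul ns (lc C a) Q = csc (a Q) Q"
proof -
  have "cmul ns (lc C a) Q = csum C (\<lambda>R. csc (a R) (cmul ns R Q))"
    unfolding lc_def cmul_csum_left cmul_csc_left ..
  also have "\<dots> = csum C (\<lambda>R. if R = Q then csc (a Q) Q else czero)"
    unfolding csum_def
  proof (intro ext sum.cong refl)
    fix i x y R assume "R \<in> C"
    thus "csc (a R) (cmul ns R Q) i x y = (if R = Q then csc (a Q) Q else czero) i x y"
      using mulQ_cases[OF C Q] by (auto simp: csc_def czero_def)
  qed
  also have "\<dots> = csc (a Q) Q"
    unfolding csum_def using Q cls_fin[OF C] by (intro ext) (unfold ifapp czero_app, simp)
  finally show ?thesis .
qed

lemma lc_Qmul: assumes C: "C \<in> CL" and Q: "Q \<in> C"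
  shows "cmul ns Q (lc C a) = csc (a Q) Q"
proof -
  have "cmul ns Q (lc C a) = csum C (\<lambda>R. csc (a R) (cmul ns Q R))"
    unfolding lc_def cmul_csum_right cmul_csc_right ..
  also have "\<dots> = csum C (\<lambda>R. if R = Q then csc (a Q) Q else czero)"
    unfolding csum_def
  proof (intro ext sum.cong refl)
    fix i x y R assume R: "R \<in> C"
    have "cmul ns Q R = (if R = Q then Q else czero)"
      using same[OF C Q R] projI[OF C Q] by auto
    thus "csc (a R) (cmul ns Q R) i x y = (if R = Q then csc (a Q) Q else czero) i x y"
      by (auto simp: csc_def czero_def)
  qed
  also have "\<dots> = csc (a Q) Q"
    unfolding csum_def using Q cls_fin[OF C] by (intro ext) (unfold ifapp czero_app, simp)
  finally show ?thesis .
qed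

lemma csc_csc: "csc a (csc b X) = csc (a * b) X"
  unfolding csc_def by (intro ext) (simp add: mult.assoc)

lemma lc_mul: assumes C: "C \<in> CL"
  shows "cmul ns (lc C a) (lc C b) = lc C (\<lambda>R. a R * b R)"
proof -
  have "cmul ns (lc C a) (lc C b) = csum C (\<lambda>R. csc (a R) (cmul ns R (lc C b)))"
    unfolding lc_def[of C a] cmul_csum_left cmul_csc_left ..
  also have "\<dots> = csum C (\<lambda>R. csc (a R * b R) R)"
    unfolding csum_def
    by (intro ext sum.cong refl) (simp add: lc_Qmul[OF C] csc_csc)
  finally show ?thesis unfolding lc_def .
qed

lemma lc_adj: assumes C: "C \<in> CL"
  shows "cadj (lc C a) = lc C (\<lambda>R. cnj (a R))"
  unfolding lc_def cadj_csum cadj_csc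
  unfolding csum_def by (intro ext sum.cong refl) (simp add: projA[OF C])

lemma lc_tau: assumes C: "C \<in> CL"
  shows "ctau ns (lc C a) = (\<Sum>R\<in>C. a R) / of_nat d"
  unfolding lc_def ctau_csum ctau_csc
  using tauR cls_sub[OF C] by (simp add: sum_divide_distrib subset_iff)

lemma lc_tau_other: assumes C: "C \<in> CL" and C': "C' \<in> CL" and ne: "C \<noteq> C'" and Q: "Q \<in> C'"
  shows "ctau ns (cmul ns (lc C a) Q) = (\<Sum>R\<in>C. a R) / (of_nat d)^2"
  unfolding lc_def cmul_csum_left ctau_csum cmul_csc_left ctau_csc
  using diff2[OF C C' ne _ Q] by (simp add: sum_divide_distrib)

lemma lc_tau_cross: assumes C: "C \<in> CL" and C': "C' \<in> CL" and ne: "C \<noteq> C'"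
  shows "ctau ns (cmul ns (lc C a) (lc C' b)) = (\<Sum>R\<in>C. a R) * (\<Sum>R\<in>C'. b R) / (of_nat d)^2"
  unfolding lc_def[of C' b] cmul_csum_right ctau_csum cmul_csc_right ctau_csc
  using lc_tau_other[OF C C' ne] by (simp add: sum_divide_distrib sum_distrib_left sum_distrib_right mult.commute)

lemma span_lc: assumes C: "C \<in> CL" and X: "X \<in> cspan C"
  shows "\<exists>a. X = lc C a"
proof -
  obtain F c where F: "finite F" "F \<subseteq> C" "X = csum F (\<lambda>Q. csc (c Q) Q)"
    using X unfolding cspan_def by blast
  have "X = lc C (\<lambda>R. if R \<in> F then c R else 0)"
    unfolding F(3) lc_def csum_def csc_def
  proof (intro ext)
    fix i x y
    have "(\<Sum>R\<in>C. (if R \<in> F then c R else 0) * R i x y) = (\<Sum>R\<in>C. if R \<in> F then c R * R i x y else 0)"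
      by (intro sum.cong) auto
    also have "\<dots> = (\<Sum>R\<in>C \<inter> F. c R * R i x y)" using cls_fin[OF C] by (simp add: sum.inter_restrict)
    also have "C \<inter> F = F" using F(2) by blast
    finally show "(\<Sum>Q\<in>F. c Q * Q i x y) = (\<Sum>R\<in>C. (if R \<in> F then c R else 0) * R i x y)" by simp
  qed
  thus ?thesis by blast
qed

end



definition ip :: "nat list \<Rightarrow> cel \<Rightarrow> cel \<Rightarrow> complex" where
  "ip ns X Y = ctau ns (cmul ns (cadj X) Y)"

lemma ip_hs: "valid_blocks ns \<Longrightarrow> ip ns X X = of_real (hsum ns X / real (\<Sum>i<length ns. ns ! i))"
  unfolding ip_def ctau_def cTr_hs cTr_cone by (simp del: of_nat_sum)

lemma hsum_nonneg: "hsum ns X \<ge> 0"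
  unfolding hsum_def by (intro sum_nonneg) auto

lemma ip_csum_le: assumes "valid_blocks ns" "finite J"
  shows "Re (ip ns (csum J f) (csum J f)) \<le> real (card J) * (\<Sum>j\<in>J. Re (ip ns (f j) (f j)))"
proof -
  let ?S = "real (\<Sum>i<length ns. ns ! i)"
  have S: "?S > 0" using cTr_cone_pos[OF assms(1)] by linarith
  have "Re (ip ns (csum J f) (csum J f)) = hsum ns (csum J f) / ?S" using ip_hs[OF assms(1)] by simp
  also have "\<dots> \<le> real (card J) * (\<Sum>j\<in>J. hsum ns (f j)) / ?S"
    using hsum_csum[OF assms(2)] S by (simp add: divide_right_mono)
  also have "\<dots> = real (card J) * (\<Sum>j\<in>J. Re (ip ns (f j) (f j)))"
    using ip_hs[OF assms(1)] by (simp add: sum_divide_distrib[symmetric] del: of_nat_sum)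
  finally show ?thesis .
qed

lemma ip_re_nonneg: "valid_blocks ns \<Longrightarrow> Re (ip ns X X) \<ge> 0"
  using ip_hs[of ns X] hsum_nonneg[of ns X] cTr_cone_pos[of ns] by (simp del: of_nat_sum)

lemma inA_cone: "inA ns (cone ns)" unfolding inA_def cone_def by auto

lemma final_alg:
  fixes d k mu x SJ S0 :: real
  assumes d4: "d \<ge> 4" and k2: "k \<ge> 2" and mu: "mu = 1 / d + x"
    and h1: "mu * (1 - mu) / d \<le> (k - 1) * SJ / d"
    and h2: "SJ = (d - 1) / d^2 - S0"
    and h3: "d^2 / (d - 1) * S0 \<ge> 1 / k"
  shows "x^2 - (d - 2) / d * x + (d - 1) / d^2 * (k - 3 + 1 / k) \<ge> 0 \<and>
     (x \<le> 1 / (2 * d) * (d - 2 - sqrt ((d - 2)^2 - 4 * (d - 1) * (k - 3 + 1 / k)))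
      \<or> x \<ge> 1 / (2 * d) * (d - 2 + sqrt ((d - 2)^2 - 4 * (d - 1) * (k - 3 + 1 / k))))"
proof -
  have dp: "d > 0" "d - 1 > 0" using d4 by auto
  have kp: "k > 0" "k - 1 \<ge> 0" using k2 by auto
  have s1: "mu * (1 - mu) \<le> (k - 1) * SJ" using h1 dp by (simp add: divide_right_mono_neg divide_le_cancel)
  have "1 / k \<le> d^2 * S0 / (d - 1)" using h3 by simp
  hence s2: "(d - 1) / (d^2 * k) \<le> S0" using dp kp
    by (simp add: field_simps)
  have s3: "SJ \<le> (d - 1) * (k - 1) / (d^2 * k)"
  proof -
    have "SJ \<le> (d - 1) / d^2 - (d - 1) / (d^2 * k)" using h2 s2 by simp
    also have "\<dots> = (d - 1) * (k - 1) / (d^2 * k)" using dp kp by (simp add: field_simps)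
    finally show ?thesis .
  qed
  have s4: "mu * (1 - mu) \<le> (d - 1) * (k - 1)^2 / (d^2 * k)"
  proof -
    have "(k - 1) * SJ \<le> (k - 1) * ((d - 1) * (k - 1) / (d^2 * k))" using s3 kp by (intro mult_left_mono) auto
    also have "\<dots> = (d - 1) * (k - 1)^2 / (d^2 * k)" by (simp add: power2_eq_square)
    finally show ?thesis using s1 by linarith
  qed
  define q where "q = x^2 - (d - 2) / d * x + (d - 1) / d^2 * (k - 3 + 1 / k)"
  have s5: "q = (d - 1) * (k - 1)^2 / (d^2 * k) - mu * (1 - mu)"
    unfolding q_def mu using dp kp by (simp add: field_simps power2_eq_square)
  have qn: "q \<ge> 0" using s4 s5 by simp
  define D where "D = (d - 2)^2 - 4 * (d - 1) * (k - 3 + 1 / k)"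
  have sq: "(2 * d * x - (d - 2))^2 - D = 4 * d^2 * q"
    unfolding D_def q_def using dp kp by (simp add: field_simps power2_eq_square)
  have sqD: "(2 * d * x - (d - 2))^2 \<ge> D" using sq qn dp by (smt (verit) mult_nonneg_nonneg zero_le_power2)
  have roots: "x \<le> 1 / (2 * d) * (d - 2 - sqrt D) \<or> x \<ge> 1 / (2 * d) * (d - 2 + sqrt D)"
  proof (cases "D < 0")
    case True
    hence "sqrt D < 0" by simp
    hence "1 / (2 * d) * (d - 2 + sqrt D) \<le> 1 / (2 * d) * (d - 2 - sqrt D)" using dp
      by (intro mult_left_mono) auto
    thus ?thesis by linarith
  next
    case False
    have "sqrt D \<le> sqrt ((2 * d * x - (d - 2))^2)" using sqD by (rule real_sqrt_le_mono)
    hence ab: "sqrt D \<le> \<bar>2 * d * x - (d - 2)\<bar>" by simp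
    show ?thesis
    proof (cases "2 * d * x - (d - 2) \<ge> 0")
      case True
      hence "d - 2 + sqrt D \<le> 2 * d * x" using ab by simp
      hence "(d - 2 + sqrt D) / (2 * d) \<le> x" using dp by (simp add: divide_le_eq mult.commute)
      thus ?thesis by simp
    next
      case False
      hence "2 * d * x \<le> d - 2 - sqrt D" using ab by simp
      hence "x \<le> (d - 2 - sqrt D) / (2 * d)" using dp by (simp add: le_divide_eq mult.commute)
      thus ?thesis by simp
    qed
  qed
  show ?thesis using qn roots unfolding q_def D_def by simp
qed

theorem mainTheorem5:
  fixes ns :: "nat list" and k d :: nat and N :: "cel set" and P :: cel
    and A :: "cel set \<Rightarrow> cel" and C0 :: "cel set" and c :: "cel \<Rightarrow> real"
  assumes blocks: "valid_blocks ns"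
    and net: "is_net ns k N" and ord: "net_order ns N d"
    and k2: "2 \<le> k" and ksqrt: "real k \<le> sqrt (real d)"
    and Pproj: "is_proj ns P" and Pspan: "P \<in> cspan N"
    and Ptau: "ctau ns P = 1 / of_nat d"
    and Aspan: "\<forall>C\<in>N // par_rel ns N. A C \<in> cspan C \<and> ctau ns (A C) = 0"
    and Adec: "csub P (csc (1 / of_nat d) (cone ns)) = csum (N // par_rel ns N) A"
    and C0: "C0 \<in> N // par_rel ns N"
    and tr: "(real d / sqrt (real d - 1) * cnorm2 ns (A C0))^2 \<ge> 1 / real k"
    and Ar: "A C0 = csum C0 (\<lambda>Q. csc (complex_of_real (c Q)) Q)"
  shows "\<forall>Q\<in>C0.
     (c Q)^2 - (real d - 2) / real d * c Q
        + (real d - 1) / (real d)^2 * (real k - 3 + 1 / real k) \<ge> 0 \<and>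
     (c Q \<le> 1 / (2 * real d) * (real d - 2 - sqrt ((real d - 2)^2 - 4 * (real d - 1) * (real k - 3 + 1 / real k)))
      \<or> c Q \<ge> 1 / (2 * real d) * (real d - 2 + sqrt ((real d - 2)^2 - 4 * (real d - 1) * (real k - 3 + 1 / real k))))"
proof
  interpret netctx ns k d N using blocks net ord k2 by unfold_locales
  fix Q assume Q: "Q \<in> C0"
  have dpos: "d > 0" using d_pos .
  have "real 2 \<le> sqrt (real d)" using k2 ksqrt by linarith
  hence "(real 2)^2 \<le> (sqrt (real d))^2" by (intro power_mono) auto
  hence d4: "real d \<ge> 4" by simp
  define a where "a C = (if C = C0 then (\<lambda>R. complex_of_real (c R)) else (SOME f. A C = lc C f))" for C
  have Aa: "A C = lc C (a C)" if C: "C \<in> CL" for C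
  proof (cases "C = C0")
    case True thus ?thesis using Ar unfolding a_def lc_def by simp
  next
    case False
    have "\<exists>f. A C = lc C f" using span_lc[OF C] Aspan C by blast
    hence "A C = lc C (SOME f. A C = lc C f)" by (rule someI_ex)
    thus ?thesis using False unfolding a_def by simp
  qed
  have sa: "(\<Sum>R\<in>C. a C R) = 0" if C: "C \<in> CL" for C
  proof -
    have "ctau ns (A C) = 0" using Aspan C by blast
    hence "(\<Sum>R\<in>C. a C R) / of_nat d = 0" using lc_tau[OF C] Aa[OF C] by simp
    thus ?thesis using dpos by simp
  qed
  have QN: "Q \<in> N" using Q cls_sub[OF C0] by blast
  have QQ: "cmul ns Q Q = Q" using projI[OF C0 Q] .
  have QA: "cadj Q = Q" using projA[OF C0 Q] .
  have QiA: "inA ns Q" using projinA[OF C0 Q] .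
  have tQ: "ctau ns Q = 1 / of_nat d" using tauR[OF QN] .
  have PP: "cmul ns P P = P" and PA: "cadj P = P" and PiA: "inA ns P" using Pproj unfolding is_proj_def by auto
  define J where "J = CL - {C0}"
  have Jfin: "finite J" unfolding J_def using CL_fin by simp
  have Jcard: "card J = k - 1" unfolding J_def using CL_fin C0 CL_card by simp
  have JCL: "C \<in> J \<Longrightarrow> C \<in> CL" "C \<in> J \<Longrightarrow> C \<noteq> C0" for C unfolding J_def by auto
  define mu :: real where "mu = 1 / real d + c Q"
  have E1: "csum CL A = cadd (A C0) (csum J A)"
    unfolding J_def csum_def cadd_def using CL_fin C0 by (intro ext) (simp add: sum.remove)
  have E2: "P = cadd (csc (1 / of_nat d) (cone ns)) (csum CL A)"
    using Adec[symmetric] unfolding csub_def cadd_def csc_def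
    by (intro ext) (metis diff_add_cancel add.commute)
  have E3: "cmul ns (A C0) Q = csc (c Q) Q" using lc_mulQ[OF C0 Q] Aa[OF C0] unfolding a_def by simp
  have E3b: "cmul ns P Q = cadd (csc (1 / of_nat d) Q) (cadd (csc (c Q) Q) (csum J (\<lambda>C. cmul ns (A C) Q)))"
    apply (subst E2)
    unfolding cmul_add_left cmul_csc_left cmul_cone_left[OF QiA] E1 E3 cmul_csum_left ..
  define Y where "Y = csum J (\<lambda>C. cmul ns (A C) Q)"
  have E4: "Y = csub (cmul ns P Q) (csc (complex_of_real mu) Q)"
    unfolding E3b Y_def mu_def csub_def cadd_def csc_def by (intro ext) (simp add: algebra_simps)
  have tAQ: "ctau ns (cmul ns (A C) Q) = 0" if "C \<in> J" for C
    using lc_tau_other[OF JCL(1)[OF that] C0 JCL(2)[OF that] Q] Aa[OF JCL(1)[OF that]] sa[OF JCL(1)[OF that]]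
    by simp
  have E5: "ctau ns (cmul ns P Q) = complex_of_real mu / of_nat d"
  proof -
    have "ctau ns (cmul ns P Q) = 1 / of_nat d * (1 / of_nat d) + c Q * (1 / of_nat d) + 0"
      unfolding E3b ctau_add ctau_csc tQ ctau_csum using tAQ by simp
    thus ?thesis unfolding mu_def using dpos by (simp add: field_simps)
  qed
  have tQPQ: "ctau ns (cmul ns (cmul ns Q P) Q) = ctau ns (cmul ns P Q)"
    by (metis ctau_comm cmul_assoc QQ)
  have E6: "ip ns Y Y = complex_of_real (mu * (1 - mu) / real d)"
  proof -
    have aY: "cadj Y = csub (cmul ns Q P) (csc (complex_of_real mu) Q)"
      unfolding E4 cadj_sub cadj_mul cadj_csc PA QA by simp
    have "ip ns Y Y = ctau ns (cmul ns (cmul ns Q P) (cmul ns P Q))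
         - complex_of_real mu * ctau ns (cmul ns (cmul ns Q P) Q)
         - (complex_of_real mu * ctau ns (cmul ns Q (cmul ns P Q))
            - complex_of_real mu * (complex_of_real mu * ctau ns (cmul ns Q Q)))"
      unfolding ip_def aY
      apply (subst E4)
      unfolding cmul_sub_left cmul_sub_right cmul_csc_left cmul_csc_right ctau_sub ctau_csc
      by (simp add: algebra_simps)
    also have "ctau ns (cmul ns (cmul ns Q P) (cmul ns P Q)) = ctau ns (cmul ns P Q)"
      by (metis cmul_assoc PP tQPQ)
    also have "ctau ns (cmul ns Q (cmul ns P Q)) = ctau ns (cmul ns P Q)"
      by (metis cmul_assoc tQPQ)
    also note tQPQ
    finally have h: "ip ns Y Y = ctau ns (cmul ns P Q) - complex_of_real mu * ctau ns (cmul ns P Q) -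
      (complex_of_real mu * ctau ns (cmul ns P Q) - complex_of_real mu * (complex_of_real mu * ctau ns (cmul ns Q Q)))" .
    show ?thesis unfolding h E5 QQ tQ using dpos
      by (simp add: field_simps power2_eq_square)
  qed
  have E9: "ip ns (A C) (A C) = (\<Sum>R\<in>C. cnj (a C R) * a C R) / of_nat d" if C: "C \<in> CL" for C
    unfolding ip_def Aa[OF C] lc_adj[OF C] lc_mul[OF C] lc_tau[OF C] ..
  have E8: "ip ns (cmul ns (A C) Q) (cmul ns (A C) Q) = ip ns (A C) (A C) / of_nat d" if CJ: "C \<in> J" for C
  proof -
    have C: "C \<in> CL" using JCL(1)[OF CJ] .
    define M where "M = lc C (a C)"
    have "ip ns (cmul ns (A C) Q) (cmul ns (A C) Q) = ctau ns (cmul ns (cmul ns Q (cadj M)) (cmul ns M Q))"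
      unfolding ip_def cadj_mul QA Aa[OF C] M_def ..
    also have "\<dots> = ctau ns (cmul ns Q (cmul ns (cmul ns (cadj M) M) Q))"
      by (simp add: cmul_assoc)
    also have "\<dots> = ctau ns (cmul ns (cmul ns (cadj M) M) Q)"
      by (metis ctau_comm cmul_assoc QQ)
    also have "\<dots> = (\<Sum>R\<in>C. cnj (a C R) * a C R) / (of_nat d)^2"
      unfolding M_def lc_adj[OF C] lc_mul[OF C] by (rule lc_tau_other[OF C C0 JCL(2)[OF CJ] Q])
    finally show ?thesis unfolding E9[OF C] by (simp add: power2_eq_square)
  qed
  have cross: "ip ns (A C) (A C') = 0" if C: "C \<in> CL" and C': "C' \<in> CL" and ne: "C \<noteq> C'" for C C'
    unfolding ip_def Aa[OF C] Aa[OF C'] lc_adj[OF C] lc_tau_cross[OF C C' ne] sa[OF C'] by simp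
  have E10: "ip ns (csum CL A) (csum CL A) = (\<Sum>C\<in>CL. ip ns (A C) (A C))"
  proof -
    have "ip ns (csum CL A) (csum CL A) = (\<Sum>C\<in>CL. \<Sum>C'\<in>CL. ip ns (A C) (A C'))"
      unfolding ip_def cadj_csum cmul_csum_left cmul_csum_right ctau_csum by (rule sum.swap)
    also have "\<dots> = (\<Sum>C\<in>CL. ip ns (A C) (A C))"
    proof (rule sum.cong[OF refl])
      fix C assume C: "C \<in> CL"
      have "(\<Sum>C'\<in>CL. ip ns (A C) (A C')) = ip ns (A C) (A C) + (\<Sum>C'\<in>CL - {C}. ip ns (A C) (A C'))"
        using CL_fin C by (simp add: sum.remove)
      also have "(\<Sum>C'\<in>CL - {C}. ip ns (A C) (A C')) = 0"
        using cross[OF C] by (intro sum.neutral) auto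
      finally show "(\<Sum>C'\<in>CL. ip ns (A C) (A C')) = ip ns (A C) (A C)" by simp
    qed
    finally show ?thesis .
  qed
  have E11: "ip ns (csum CL A) (csum CL A) = (of_nat d - 1) / (of_nat d)^2"
  proof -
    define Z where "Z = csub P (csc (1 / of_nat d) (cone ns))"
    have aZ: "cadj Z = Z" unfolding Z_def cadj_sub cadj_csc PA cadj_cone by simp
    have "ip ns Z Z = ctau ns P - 1 / of_nat d * ctau ns P - (1 / of_nat d * ctau ns P - 1 / of_nat d * (1 / of_nat d * ctau ns (cone ns)))"
      unfolding ip_def aZ unfolding Z_def cmul_sub_left cmul_sub_right cmul_csc_left cmul_csc_right
        ctau_sub ctau_csc PP cmul_cone_left[OF PiA] cmul_cone_right[OF PiA] cmul_cone_left[OF inA_cone]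
      by (simp add: algebra_simps)
    also have "\<dots> = (of_nat d - 1) / (of_nat d)^2"
      unfolding Ptau ctau_cone[OF blocks] using dpos by (simp add: field_simps power2_eq_square)
    finally show ?thesis using Adec unfolding Z_def by simp
  qed
  define sv where "sv C = Re (ip ns (A C) (A C))" for C
  have sv_nn: "sv C \<ge> 0" for C unfolding sv_def using ip_re_nonneg[OF blocks] .
  have h2: "(\<Sum>C\<in>J. sv C) = (real d - 1) / (real d)^2 - sv C0"
  proof -
    have "(\<Sum>C\<in>CL. sv C) = Re (ip ns (csum CL A) (csum CL A))" unfolding E10 sv_def by simp
    also have "\<dots> = (real d - 1) / (real d)^2" unfolding E11 by simp
    finally have "(\<Sum>C\<in>CL. sv C) = (real d - 1) / (real d)^2" .
    moreover have "(\<Sum>C\<in>CL. sv C) = sv C0 + (\<Sum>C\<in>J. sv C)" unfolding J_def using CL_fin C0 by (simp add: sum.remove)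
    ultimately show ?thesis by simp
  qed
  have h1: "mu * (1 - mu) / real d \<le> (real k - 1) * (\<Sum>C\<in>J. sv C) / real d"
  proof -
    have "mu * (1 - mu) / real d = Re (ip ns Y Y)" unfolding E6 by simp
    also have "\<dots> \<le> real (card J) * (\<Sum>C\<in>J. Re (ip ns (cmul ns (A C) Q) (cmul ns (A C) Q)))"
      unfolding Y_def by (rule ip_csum_le[OF blocks Jfin])
    also have "(\<Sum>C\<in>J. Re (ip ns (cmul ns (A C) Q) (cmul ns (A C) Q))) = (\<Sum>C\<in>J. sv C / real d)"
      unfolding sv_def using E8 by (intro sum.cong) auto
    also have "real (card J) = real k - 1" using Jcard k2 by simp
    finally show ?thesis by (simp add: sum_divide_distrib[symmetric])
  qed
  have h3: "(real d)^2 / (real d - 1) * sv C0 \<ge> 1 / real k"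
  proof -
    have "cnorm2 ns (A C0) = sqrt (sv C0)" unfolding cnorm2_def sv_def ip_def ..
    hence "(real d / sqrt (real d - 1) * cnorm2 ns (A C0))^2 = (real d)^2 / (real d - 1) * sv C0"
      using sv_nn[of C0] d4 by (simp add: power_mult_distrib power_divide)
    thus ?thesis using tr by simp
  qed
  have k2r: "real k \<ge> 2" using k2 by simp
  show "(c Q)^2 - (real d - 2) / real d * c Q
        + (real d - 1) / (real d)^2 * (real k - 3 + 1 / real k) \<ge> 0 \<and>
     (c Q \<le> 1 / (2 * real d) * (real d - 2 - sqrt ((real d - 2)^2 - 4 * (real d - 1) * (real k - 3 + 1 / real k)))
      \<or> c Q \<ge> 1 / (2 * real d) * (real d - 2 + sqrt ((real d - 2)^2 - 4 * (real d - 1) * (real k - 3 + 1 / real k))))"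
    by (rule final_alg[OF d4 k2r mu_def h1 h2 h3])
qed

end
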